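(* Let $c_2,c_3$ be constants, $\mu(t)=t^2+c_2t+c_3$, and $\vartheta_n(t)=(-4)^{-n}(2t+1/2+c_2)_n(-2t+1/2-c_2)_n$ ($n\ge0$). Let $\{P_n\}_{n\ge0}$ be a sequence of monic orthogonal polynomials in the lattice $\mu(t)$, $\deg P_n=n$, and write $P_n=\sum_{k=0}^{n}A_{n,k}\vartheta_k(t)$, $A=(A_{n,k})_{n,k\ge0}$ (lower triangular, unit diagonal). Let $\tilde A=\tilde D A D$, where $D$ is the infinite matrix with $D_{n+1,n}=n+1$ ($n\ge0$) and all other entries zero, and $\tilde D$ is the infinite matrix with $\tilde D_{n,n+1}=1/(n+1)$ ($n\ge0$) and all other entries zero. Let $\mathbf{X}^1=X+\operatorname{diag}\{f_0,f_1,\ldots\}$, where $X_{n,n+1}=1$ (other entries zero) and $f_n=-\frac{c_2^2}{4}+\frac{(2n+1)^2}{16}+c_3$. Then $\{P_n\}$ is a sequence of classical orthogonal polynomials on the quadratic lattice $\mu(t)$ if and only if $$M\,\tilde A=\tilde A\,\mathbf{X}^1,$$ where $M$ is the tridiagonal matrix with $M_{n,n}=\beta'_n$, $M_{n,n+1}=1$, $M_{n,n-1}=\gamma'_n$ formed from the three-term recurrence coefficients of the sequence of divided differences, namely $\mu(t)Q_n=Q_{n+1}+\beta'_nQ_n+\gamma'_nQ_{n-1}$ with $Q_n=P'_{n+1}$.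
   Context: $(a)_n$ is the Pochhammer symbol. The divided-difference operator is $\mathbb{D}f(t)=\frac{f(t+1/2)-f(t-1/2)}{\mu(t+1/2)-\mu(t-1/2)}$; it maps polynomials of degree $n$ in $\mu(t)$ to polynomials of degree $n-1$ in $\mu(t)$, and $\mathbb{D}\vartheta_n=n\vartheta_{n-1}$. A sequence of monic polynomials $\{R_n\}$ in $\mu(t)$ is called orthogonal if it satisfies $\mu(t)R_n=R_{n+1}+b_nR_n+c_nR_{n-1}$, $R_{-1}=0$, $R_0=1$, with $c_n\neq0$. Set $P'_n=\frac1n\mathbb{D}P_n$ for $n\ge1$ (monic, degree $n-1$). The sequence $\{P_n\}$ is called classical (Hahn's property) if $\{P'_n\}_{n\ge1}$ is also a sequence of monic orthogonal polynomials in $\mu(t)$. Note that $\tilde A$ is the coefficient matrix of $(P'_1,P'_2,\ldots)$ in the basis $\{\vartheta_k\}$. Indices start at $0$. *)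

theory Defs
  imports "HOL-Computational_Algebra.Polynomial"
begin

text \<open>All polynomials are polynomials in the variable t (type 'a poly).
  A polynomial in the lattice mu(t) is one of the form pcompose p (lattice c2 c3).\<close>

definition lattice :: "'a::field_char_0 \<Rightarrow> 'a \<Rightarrow> 'a poly" where
  "lattice c2 c3 = [:c3, c2, 1:]"

definition theta :: "'a::field_char_0 \<Rightarrow> 'a \<Rightarrow> nat \<Rightarrow> 'a poly" where
  "theta c2 c3 n = smult (inverse ((-4) ^ n))
     (pochhammer [:1/2 + c2, 2:] n * pochhammer [:1/2 - c2, -2:] n)"

definition divdiff :: "'a::field_char_0 \<Rightarrow> 'a \<Rightarrow> 'a poly \<Rightarrow> 'a poly" where
  "divdiff c2 c3 f =
     (pcompose f [:1/2, 1:] - pcompose f [:-1/2, 1:]) div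
     (pcompose (lattice c2 c3) [:1/2, 1:] - pcompose (lattice c2 c3) [:-1/2, 1:])"

definition dprime :: "'a::field_char_0 \<Rightarrow> 'a \<Rightarrow> (nat \<Rightarrow> 'a poly) \<Rightarrow> nat \<Rightarrow> 'a poly" where
  "dprime c2 c3 P n = smult (inverse (of_nat n)) (divdiff c2 c3 (P n))"

definition orthogonal_lattice :: "'a::field_char_0 poly \<Rightarrow> (nat \<Rightarrow> 'a poly) \<Rightarrow> bool" where
  "orthogonal_lattice mu R \<longleftrightarrow> R 0 = 1 \<and>
     (\<exists>b c. (\<forall>n\<ge>1. c n \<noteq> 0) \<and>
        (\<forall>n. mu * R n = R (Suc n) + smult (b n) (R n)
                + (if n = 0 then 0 else smult (c n) (R (n - 1)))))"

text \<open>Classical (Hahn's property): (P'_{n+1})_{n\<ge>0} is again monic orthogonal in mu.\<close>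
definition classical_lattice :: "'a::field_char_0 \<Rightarrow> 'a \<Rightarrow> (nat \<Rightarrow> 'a poly) \<Rightarrow> bool" where
  "classical_lattice c2 c3 P \<longleftrightarrow>
     orthogonal_lattice (lattice c2 c3) (\<lambda>n. dprime c2 c3 P (Suc n))"

definition coeffA :: "'a::field_char_0 \<Rightarrow> 'a \<Rightarrow> (nat \<Rightarrow> 'a poly) \<Rightarrow> nat \<Rightarrow> nat \<Rightarrow> 'a" where
  "coeffA c2 c3 P = (THE A. (\<forall>n. P n = (\<Sum>k\<le>n. smult (A n k) (theta c2 c3 k))) \<and>
                            (\<forall>n k. n < k \<longrightarrow> A n k = 0))"

text \<open>Infinite matrices indexed from 0; product of a row-finite matrix F with G.\<close>
definition mmult :: "(nat \<Rightarrow> nat \<Rightarrow> 'a::comm_ring_1) \<Rightarrow> (nat \<Rightarrow> nat \<Rightarrow> 'a) \<Rightarrow> nat \<Rightarrow> nat \<Rightarrow> 'a" where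
  "mmult F G i j = (\<Sum>k | F i k \<noteq> 0. F i k * G k j)"

definition Dmat :: "nat \<Rightarrow> nat \<Rightarrow> 'a::field_char_0" where
  "Dmat i j = (if i = Suc j then of_nat (Suc j) else 0)"

definition Dtilde :: "nat \<Rightarrow> nat \<Rightarrow> 'a::field_char_0" where
  "Dtilde i j = (if j = Suc i then inverse (of_nat (Suc i)) else 0)"

definition Atilde :: "'a::field_char_0 \<Rightarrow> 'a \<Rightarrow> (nat \<Rightarrow> 'a poly) \<Rightarrow> nat \<Rightarrow> nat \<Rightarrow> 'a" where
  "Atilde c2 c3 P = mmult (mmult Dtilde (coeffA c2 c3 P)) Dmat"

definition fcoef :: "'a::field_char_0 \<Rightarrow> 'a \<Rightarrow> nat \<Rightarrow> 'a" where
  "fcoef c2 c3 n = - (c2 ^ 2) / 4 + (2 * of_nat n + 1)^2 / 16 + c3"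

definition X1 :: "'a::field_char_0 \<Rightarrow> 'a \<Rightarrow> nat \<Rightarrow> nat \<Rightarrow> 'a" where
  "X1 c2 c3 i j = (if j = Suc i then 1 else if j = i then fcoef c2 c3 i else 0)"

definition Mtri :: "(nat \<Rightarrow> 'a::field_char_0) \<Rightarrow> (nat \<Rightarrow> 'a) \<Rightarrow> nat \<Rightarrow> nat \<Rightarrow> 'a" where
  "Mtri beta gamma i j = (if j = i then beta i else if j = Suc i then 1
                          else if i = Suc j then gamma i else 0)"

end

theory Submission
  imports Defs
begin

lemma poly_ext_eq: "(\<And>x. poly p x = poly q x) \<Longrightarrow> (p::'a::field_char_0 poly) = q"
  using poly_eq_poly_eq_iff by blast

lemma theta_0[simp]: "theta c2 c3 0 = 1"
  by (simp add: theta_def)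

lemma theta_Suc: "theta c2 c3 (Suc k) = theta c2 c3 k * (lattice c2 c3 - [:fcoef c2 c3 k:])"
proof -
  have e: "smult (inverse (-4)) (([:1/2 + c2, 2:] + of_nat k) * ([:1/2 - c2, -2:] + of_nat k))
     = lattice c2 c3 - [:fcoef c2 c3 k:]"
    by (rule poly_ext_eq) (simp add: of_nat_poly lattice_def fcoef_def field_simps power2_eq_square; algebra)
  show ?thesis
    unfolding theta_def pochhammer_Suc
    by (simp add: e[symmetric] mult_ac)
qed

lemma quad_deg: "degree (lattice c2 c3 - [:f::'a::field_char_0:]) = 2"
  by (simp add: lattice_def numeral_2_eq_2)
lemma quad_lc: "lead_coeff (lattice c2 c3 - [:f::'a::field_char_0:]) = 1"
  by (simp add: lattice_def numeral_2_eq_2)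

lemma theta_deg_lc: "degree (theta c2 c3 k) = 2*k \<and> lead_coeff (theta c2 c3 k) = 1"
proof (induction k)
  case 0 then show ?case by simp
next
  case (Suc k)
  have nz: "theta c2 c3 k \<noteq> 0" using Suc by auto
  have nz2: "lattice c2 c3 - [:fcoef c2 c3 k:] \<noteq> 0" using quad_deg[of c2 c3] by auto
  have d: "degree (theta c2 c3 (Suc k)) = 2 * Suc k" using Suc unfolding theta_Suc
    by (simp add: degree_mult_eq[OF nz nz2] quad_deg)
  have l0: "lead_coeff (theta c2 c3 k) = 1" using Suc.IH by (rule conjunct2)
  have l: "lead_coeff (theta c2 c3 (Suc k)) = 1"
    by (simp only: theta_Suc lead_coeff_mult quad_lc mult_1_right l0)
  show ?case using d l by blast
qed

lemma theta_coeff_top: "coeff (theta c2 c3 k) (2*k) = 1"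
proof -
  have "coeff (theta c2 c3 k) (degree (theta c2 c3 k)) = 1" using theta_deg_lc[of c2 c3 k] by blast
  moreover have "degree (theta c2 c3 k) = 2*k" using theta_deg_lc[of c2 c3 k] by blast
  ultimately show ?thesis by simp
qed

lemma theta_coeff_big: "2*k < n \<Longrightarrow> coeff (theta c2 c3 k) n = 0"
  using theta_deg_lc[of c2 c3 k] by (simp add: coeff_eq_0)

lemma mu_theta: "lattice c2 c3 * theta c2 c3 k = theta c2 c3 (Suc k) + smult (fcoef c2 c3 k) (theta c2 c3 k)"
  by (simp add: theta_Suc algebra_simps)

lemma theta_indep0:
  assumes "(\<Sum>k\<le>N. smult (a k) (theta c2 c3 k)) = 0" "k \<le> N"
  shows "a k = 0"
  using assms
proof (induction N arbitrary: k)
  case 0 then show ?case by simp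
next
  case (Suc N)
  have c: "coeff (\<Sum>k\<le>N. smult (a k) (theta c2 c3 k)) (2*Suc N) = 0"
    by (simp add: coeff_sum theta_coeff_big)
  have "coeff (\<Sum>k\<le>Suc N. smult (a k) (theta c2 c3 k)) (2*Suc N) = 
     coeff (\<Sum>k\<le>N. smult (a k) (theta c2 c3 k)) (2*Suc N) + a (Suc N) * coeff (theta c2 c3 (Suc N)) (2*Suc N)"
    by (simp only: sum.atMost_Suc coeff_add coeff_smult)
  then have "coeff (\<Sum>k\<le>Suc N. smult (a k) (theta c2 c3 k)) (2*Suc N) = a (Suc N)"
    using c by (simp only: theta_coeff_top) simp
  moreover have "coeff (\<Sum>k\<le>Suc N. smult (a k) (theta c2 c3 k)) (2*Suc N) = 0"
    using Suc.prems(1) by (metis coeff_0)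
  ultimately have aN: "a (Suc N) = 0" by metis
  then have "(\<Sum>k\<le>N. smult (a k) (theta c2 c3 k)) = 0" using Suc.prems by simp
  then show ?case using Suc aN by (cases "k = Suc N") auto
qed

lemma theta_indep:
  assumes "(\<Sum>k\<le>N. smult (a k) (theta c2 c3 k)) = (\<Sum>k\<le>N. smult (b k) (theta c2 c3 k))" "k \<le> N"
  shows "a k = b k"
proof -
  have "(\<Sum>k\<le>N. smult (a k - b k) (theta c2 c3 k)) = 0"
    using assms(1) by (simp add: smult_diff_left sum_subtractf)
  from theta_indep0[OF this assms(2)] show ?thesis by simp
qed

definition gq :: "'a::field_char_0 \<Rightarrow> nat \<Rightarrow> 'a poly" where
  "gq c2 k = smult (1/16) ([:2*c2 + 2*of_nat k + 1, 4:] * [:2*c2 + 2*of_nat k + 3, 4:])"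
definition hq :: "'a::field_char_0 \<Rightarrow> nat \<Rightarrow> 'a poly" where
  "hq c2 k = smult (1/16) ([:2*c2 - 2*of_nat k - 1, 4:] * [:2*c2 - 2*of_nat k - 3, 4:])"

lemma shift_plus: "pcompose (theta c2 c3 (Suc k)) [:1/2, 1:] = theta c2 c3 k * gq c2 k"
proof (induction k)
  case 0
  show ?case unfolding theta_Suc theta_0
    by (simp, rule poly_ext_eq) (simp add: poly_pcompose gq_def lattice_def fcoef_def field_simps power2_eq_square; algebra)
next
  case (Suc k)
  have e: "gq c2 k * pcompose (lattice c2 c3 - [:fcoef c2 c3 (Suc k):]) [:1/2, 1:]
      = (lattice c2 c3 - [:fcoef c2 c3 k:]) * gq c2 (Suc k)"
    by (rule poly_ext_eq) (simp add: poly_pcompose gq_def lattice_def fcoef_def field_simps power2_eq_square; algebra)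
  show ?case
    apply (subst theta_Suc)
    apply (simp only: pcompose_mult Suc)
    apply (simp only: mult.assoc e)
    apply (simp add: theta_Suc mult_ac)
    done
qed

lemma shift_minus: "pcompose (theta c2 c3 (Suc k)) [:-1/2, 1:] = theta c2 c3 k * hq c2 k"
proof (induction k)
  case 0
  show ?case unfolding theta_Suc theta_0
    by (simp, rule poly_ext_eq) (simp add: poly_pcompose hq_def lattice_def fcoef_def field_simps power2_eq_square; algebra)
next
  case (Suc k)
  have e: "hq c2 k * pcompose (lattice c2 c3 - [:fcoef c2 c3 (Suc k):]) [:-1/2, 1:]
      = (lattice c2 c3 - [:fcoef c2 c3 k:]) * hq c2 (Suc k)"
    by (rule poly_ext_eq) (simp add: poly_pcompose hq_def lattice_def fcoef_def field_simps power2_eq_square; algebra)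
  show ?case
    apply (subst theta_Suc)
    apply (simp only: pcompose_mult Suc)
    apply (simp only: mult.assoc e)
    apply (simp add: theta_Suc mult_ac)
    done
qed

definition Nd :: "'a::field_char_0 poly \<Rightarrow> 'a poly" where
  "Nd f = pcompose f [:1/2, 1:] - pcompose f [:-1/2, 1:]"

lemma gh: "gq c2 k - hq c2 k = smult (of_nat (Suc k)) [:c2, 2:]"
  by (rule poly_ext_eq) (simp add: gq_def hq_def field_simps power2_eq_square; algebra)

lemma Nd_theta: "Nd (theta c2 c3 k) = [:c2, 2:] * smult (of_nat k) (theta c2 c3 (k - 1))"
proof (cases k)
  case 0 then show ?thesis by (simp add: Nd_def pcompose_1)
next
  case (Suc j)
  have "theta c2 c3 j * gq c2 j - theta c2 c3 j * hq c2 j = theta c2 c3 j * (gq c2 j - hq c2 j)"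
    by (simp add: right_diff_distrib)
  then show ?thesis unfolding Suc Nd_def shift_plus shift_minus gh
    by (simp add: mult_ac smult_add_right algebra_simps)
qed

lemma denom: "pcompose (lattice c2 c3) [:1/2, 1:] - pcompose (lattice c2 c3) [:-1/2, 1:] = [:c2, 2:]"
  by (rule poly_ext_eq) (simp add: poly_pcompose lattice_def field_simps power2_eq_square; algebra)

lemma divdiff_Nd: "divdiff c2 c3 f = Nd f div [:c2, 2:]"
  unfolding divdiff_def denom Nd_def ..

lemma divdiff_sum: "divdiff c2 c3 (\<Sum>k\<le>n. smult (a k) (theta c2 c3 k))
   = (\<Sum>k\<le>n. smult (a k * of_nat k) (theta c2 c3 (k - 1)))"
proof -
  have "Nd (\<Sum>k\<le>n. smult (a k) (theta c2 c3 k)) = [:c2, 2:] * (\<Sum>k\<le>n. smult (a k * of_nat k) (theta c2 c3 (k - 1)))"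
    unfolding Nd_def pcompose_sum pcompose_smult sum_subtractf[symmetric] smult_diff_right[symmetric]
        Nd_theta[unfolded Nd_def] sum_distrib_left mult_smult_right by (simp add: smult_smult)
  moreover have nz: "[:c2, 2:] \<noteq> (0::'a poly)" by simp
  ultimately show ?thesis by (metis divdiff_Nd nonzero_mult_div_cancel_left)
qed

lemma smult_sum_right: "smult c (\<Sum>k\<in>S. f k) = (\<Sum>k\<in>S. smult c (f k))"
  by (induction S rule: infinite_finite_induct) (auto simp: smult_add_right)

definition inspan :: "'a::field_char_0 \<Rightarrow> 'a \<Rightarrow> nat \<Rightarrow> 'a poly \<Rightarrow> bool" where
  "inspan c2 c3 n p \<longleftrightarrow> (\<exists>a. p = (\<Sum>k\<le>n. smult (a k) (theta c2 c3 k)))"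

lemma sum_extend:
  assumes "m \<le> n" "\<And>k. m < k \<Longrightarrow> a k = 0"
  shows "(\<Sum>k\<le>n. smult (a k) (theta c2 c3 k)) = (\<Sum>k\<le>m. smult (a k) (theta c2 c3 k))"
  by (rule sum.mono_neutral_right) (use assms in auto)

lemma span_mono: "m \<le> n \<Longrightarrow> inspan c2 c3 m p \<Longrightarrow> inspan c2 c3 n p"
  unfolding inspan_def
proof (elim exE)
  fix a assume mn: "m \<le> n" and p: "p = (\<Sum>k\<le>m. smult (a k) (theta c2 c3 k))"
  define b where "b k = (if k \<le> m then a k else 0)" for k
  have "(\<Sum>k\<le>n. smult (b k) (theta c2 c3 k)) = (\<Sum>k\<le>m. smult (b k) (theta c2 c3 k))"
    by (rule sum_extend) (use mn in \<open>auto simp: b_def\<close>)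
  also have "\<dots> = p" unfolding p by (rule sum.cong) (auto simp: b_def)
  finally show "\<exists>a. p = (\<Sum>k\<le>n. smult (a k) (theta c2 c3 k))" by metis
qed

lemma span_add: "inspan c2 c3 n p \<Longrightarrow> inspan c2 c3 n q \<Longrightarrow> inspan c2 c3 n (p + q)"
  unfolding inspan_def
proof (elim exE)
  fix a b assume "p = (\<Sum>k\<le>n. smult (a k) (theta c2 c3 k))" "q = (\<Sum>k\<le>n. smult (b k) (theta c2 c3 k))"
  then have "p + q = (\<Sum>k\<le>n. smult (a k + b k) (theta c2 c3 k))"
    by (simp add: smult_add_left sum.distrib)
  then show "\<exists>a. p + q = (\<Sum>k\<le>n. smult (a k) (theta c2 c3 k))" by (rule exI[of _ "\<lambda>k. a k + b k"])
qed

lemma span_smult: "inspan c2 c3 n p \<Longrightarrow> inspan c2 c3 n (smult c p)"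
  unfolding inspan_def
proof (elim exE)
  fix a assume "p = (\<Sum>k\<le>n. smult (a k) (theta c2 c3 k))"
  then have "smult c p = (\<Sum>k\<le>n. smult (c * a k) (theta c2 c3 k))"
    by (simp add: smult_sum_right)
  then show "\<exists>a. smult c p = (\<Sum>k\<le>n. smult (a k) (theta c2 c3 k))" by (rule exI[of _ "\<lambda>k. c * a k"])
qed

lemma span_0: "inspan c2 c3 n 0"
  unfolding inspan_def by (rule exI[of _ "\<lambda>_. 0"]) simp

lemma span_diff: "inspan c2 c3 n p \<Longrightarrow> inspan c2 c3 n q \<Longrightarrow> inspan c2 c3 n (p - q)"
  using span_add[of c2 c3 n p "smult (-1) q"] span_smult[of c2 c3 n q "-1"] by simp

lemma span_mu: "inspan c2 c3 n p \<Longrightarrow> inspan c2 c3 (Suc n) (lattice c2 c3 * p)"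
proof -
  assume "inspan c2 c3 n p"
  then obtain a where p: "p = (\<Sum>k\<le>n. smult (a k) (theta c2 c3 k))" unfolding inspan_def by blast
  have "lattice c2 c3 * p = (\<Sum>k\<le>n. smult (a k) (theta c2 c3 (Suc k)))
        + (\<Sum>k\<le>n. smult (a k * fcoef c2 c3 k) (theta c2 c3 k))"
    unfolding p by (simp add: sum_distrib_left mu_theta smult_add_right sum.distrib)
  moreover have "inspan c2 c3 (Suc n) (\<Sum>k\<le>n. smult (a k) (theta c2 c3 (Suc k)))"
  proof -
    define b where "b j = (if j = 0 then 0 else a (j - 1))" for j
    have "(\<Sum>k\<le>Suc n. smult (b k) (theta c2 c3 k)) = (\<Sum>k\<le>n. smult (a k) (theta c2 c3 (Suc k)))"
      unfolding sum.atMost_Suc_shift b_def by simp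
    then show ?thesis unfolding inspan_def by (metis (no_types))
  qed
  moreover have "inspan c2 c3 (Suc n) (\<Sum>k\<le>n. smult (a k * fcoef c2 c3 k) (theta c2 c3 k))"
    by (rule span_mono[of n]) (auto simp: inspan_def)
  ultimately show ?thesis using span_add by metis
qed

lemma P_span:
  assumes "orthogonal_lattice (lattice c2 c3) P"
  shows "inspan c2 c3 n (P n)"
proof -
  have P0: "P 0 = 1" using assms unfolding orthogonal_lattice_def by (rule conjunct1)
  obtain b c where h: "(\<forall>n\<ge>1. c n \<noteq> 0) \<and> (\<forall>n. lattice c2 c3 * P n = P (Suc n) + smult (b n) (P n)
                + (if n = 0 then 0 else smult (c n) (P (n - 1))))"
    using conjunct2[OF assms[unfolded orthogonal_lattice_def]] by metis
  have rec: "lattice c2 c3 * P n = P (Suc n) + smult (b n) (P n)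
                + (if n = 0 then 0 else smult (c n) (P (n - 1)))" for n using h by blast
  have recS: "P (Suc n) = lattice c2 c3 * P n - smult (b n) (P n) - (if n = 0 then 0 else smult (c n) (P (n - 1)))" for n
    using rec[of n] by (simp add: algebra_simps)
  have s0: "inspan c2 c3 0 (P 0)" unfolding inspan_def P0 by (rule exI[of _ "\<lambda>_. 1"]) simp
  have "inspan c2 c3 n (P n) \<and> inspan c2 c3 (Suc n) (P (Suc n))" for n
  proof (induction n)
    case 0
    have m: "inspan c2 c3 (Suc 0) (lattice c2 c3 * P 0)" using span_mu[OF s0] .
    have sm: "inspan c2 c3 (Suc 0) (smult (b 0) (P 0))" using span_mono[OF _ span_smult[OF s0]] by simp
    have "inspan c2 c3 1 (lattice c2 c3 * P 0 - smult (b 0) (P 0) - 0)"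
      using span_diff[OF span_diff[OF m sm] span_0] by simp
    then have "inspan c2 c3 1 (P 1)" using recS[of 0] by simp
    then show ?case using s0 by simp
  next
    case (Suc n)
    have "inspan c2 c3 (Suc (Suc n)) (P (Suc (Suc n)))"
    proof -
      have a: "inspan c2 c3 (Suc (Suc n)) (lattice c2 c3 * P (Suc n))" using Suc by (intro span_mu) auto
      have b: "inspan c2 c3 (Suc (Suc n)) (smult (b (Suc n)) (P (Suc n)))"
        using Suc by (intro span_smult span_mono[where m="Suc n" and n="Suc (Suc n)"]) auto
      have c: "inspan c2 c3 (Suc (Suc n)) (smult (c (Suc n)) (P n))"
        using Suc by (intro span_smult span_mono[where m=n and n="Suc (Suc n)"]) auto
      show ?thesis unfolding recS[of "Suc n"] using span_diff[OF span_diff[OF a b] c] by simp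
    qed
    then show ?case using Suc by simp
  qed
  then show ?thesis by blast
qed

lemma coeffA_prop:
  assumes "orthogonal_lattice (lattice c2 c3) P"
  shows "(\<forall>n. P n = (\<Sum>k\<le>n. smult (coeffA c2 c3 P n k) (theta c2 c3 k))) \<and> (\<forall>n k. n < k \<longrightarrow> coeffA c2 c3 P n k = 0)"
proof -
  define a where "a n = (SOME a. P n = (\<Sum>k\<le>n. smult (a k) (theta c2 c3 k)))" for n
  have a: "P n = (\<Sum>k\<le>n. smult (a n k) (theta c2 c3 k))" for n
  proof -
    have ex: "\<exists>a. P n = (\<Sum>k\<le>n. smult (a k) (theta c2 c3 k))"
      using P_span[OF assms, of n] unfolding inspan_def .
    show ?thesis unfolding a_def
      by (rule someI_ex[where P="\<lambda>a. P n = (\<Sum>k\<le>n. smult (a k) (theta c2 c3 k))", OF ex])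
  qed
  define A0 where "A0 n k = (if k \<le> n then a n k else 0)" for n k
  have r1: "\<forall>n. P n = (\<Sum>k\<le>n. smult (A0 n k) (theta c2 c3 k))"
  proof
    fix n show "P n = (\<Sum>k\<le>n. smult (A0 n k) (theta c2 c3 k))"
      unfolding a[of n] by (rule sum.cong) (auto simp: A0_def)
  qed
  have r2: "\<forall>n k. n < k \<longrightarrow> A0 n k = 0" by (auto simp: A0_def)
  have u: "B = A0" if "(\<forall>n. P n = (\<Sum>k\<le>n. smult (B n k) (theta c2 c3 k))) \<and> (\<forall>n k. n < k \<longrightarrow> B n k = 0)" for B
  proof (intro ext)
    fix n k
    show "B n k = A0 n k"
    proof (cases "k \<le> n")
      case True
      have "(\<Sum>k\<le>n. smult (B n k) (theta c2 c3 k)) = (\<Sum>k\<le>n. smult (A0 n k) (theta c2 c3 k))"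
        using that r1 by simp
      from theta_indep[OF this True] show ?thesis .
    next
      case False then show ?thesis using that r2 by auto
    qed
  qed
  have cA: "coeffA c2 c3 P = A0" unfolding coeffA_def
    by (rule the_equality) (rule conjI[OF r1 r2], rule u, assumption)
  show ?thesis unfolding cA by (rule conjI[OF r1 r2])
qed

lemma supp_le: "(\<And>k. (n::nat) < k \<Longrightarrow> f k = 0) \<Longrightarrow> {k. f k \<noteq> 0} \<subseteq> {..n}"
proof (rule subsetI)
  fix k assume k: "k \<in> {k. f k \<noteq> 0}" and z: "\<And>k. n < k \<Longrightarrow> f k = 0"
  then have "\<not> n < k" by auto
  then show "k \<in> {..n}" by simp
qed

lemma mmult_eq:
  assumes "finite S" "{k. F i k \<noteq> 0} \<subseteq> S"
  shows "mmult F G i j = (\<Sum>k\<in>S. F i k * G k j)"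
  unfolding mmult_def by (rule sum.mono_neutral_left[OF assms]) auto

lemma Atilde_eq:
  assumes "orthogonal_lattice (lattice c2 c3) P"
  shows "Atilde c2 c3 P i j = coeffA c2 c3 P (Suc i) (Suc j) * of_nat (Suc j) / of_nat (Suc i)"
proof -
  let ?A = "coeffA c2 c3 P"
  have z: "n < k \<Longrightarrow> ?A n k = 0" for n k using coeffA_prop[OF assms] by blast
  have d1: "mmult Dtilde ?A i' k = inverse (of_nat (Suc i')) * ?A (Suc i') k" for i' k
    by (subst mmult_eq[where S="{Suc i'}"]) (auto simp: Dtilde_def split: if_splits)
  have dfun: "mmult Dtilde ?A = (\<lambda>i k. inverse (of_nat (Suc i)) * ?A (Suc i) k)"
    by (intro ext) (rule d1)
  have "Atilde c2 c3 P i j = (\<Sum>k\<le>Suc i. inverse (of_nat (Suc i)) * ?A (Suc i) k * Dmat k j)"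
    unfolding Atilde_def dfun
    by (rule mmult_eq, simp, rule supp_le, simp add: z)
  also have "\<dots> = (\<Sum>k\<le>Suc i. if k = Suc j then inverse (of_nat (Suc i)) * ?A (Suc i) (Suc j) * of_nat (Suc j) else 0)"
    by (rule sum.cong) (auto simp: Dmat_def)
  also have "\<dots> = ?A (Suc i) (Suc j) * of_nat (Suc j) / of_nat (Suc i)"
    using z[of "Suc i" "Suc j"] by (auto simp: field_simps)
  finally show ?thesis .
qed

lemma Atilde_zero:
  assumes "orthogonal_lattice (lattice c2 c3) P" "i < j"
  shows "Atilde c2 c3 P i j = 0"
  using coeffA_prop[OF assms(1)] assms(2) by (simp add: Atilde_eq[OF assms(1)])

lemma Q_repr0:
  assumes "orthogonal_lattice (lattice c2 c3) P"
  shows "dprime c2 c3 P (Suc i) = (\<Sum>j\<le>i. smult (Atilde c2 c3 P i j) (theta c2 c3 j))"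
proof -
  let ?A = "coeffA c2 c3 P"
  have e: "P (Suc i) = (\<Sum>k\<le>Suc i. smult (?A (Suc i) k) (theta c2 c3 k))" using coeffA_prop[OF assms] by blast
  have "divdiff c2 c3 (P (Suc i)) = (\<Sum>k\<le>Suc i. smult (?A (Suc i) k * of_nat k) (theta c2 c3 (k - 1)))"
    unfolding e by (rule divdiff_sum)
  also have "\<dots> = (\<Sum>j\<le>i. smult (?A (Suc i) (Suc j) * of_nat (Suc j)) (theta c2 c3 j))"
    unfolding sum.atMost_Suc_shift by simp
  finally have X: "divdiff c2 c3 (P (Suc i)) = (\<Sum>j\<le>i. smult (?A (Suc i) (Suc j) * of_nat (Suc j)) (theta c2 c3 j))" .
  show ?thesis
    unfolding dprime_def Atilde_eq[OF assms] X smult_sum_right smult_smult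
    by (intro sum.cong) (auto simp: field_simps)
qed

lemma Q_repr:
  assumes "orthogonal_lattice (lattice c2 c3) P" "i \<le> N"
  shows "dprime c2 c3 P (Suc i) = (\<Sum>j\<le>N. smult (Atilde c2 c3 P i j) (theta c2 c3 j))"
  unfolding Q_repr0[OF assms(1)]
  by (rule sum_extend[symmetric]) (use assms Atilde_zero in auto)

lemma Q0:
  assumes "orthogonal_lattice (lattice c2 c3) P"
  shows "dprime c2 c3 P (Suc 0) = 1"
proof -
  have P0: "P 0 = 1" using assms unfolding orthogonal_lattice_def by (rule conjunct1)
  obtain b c where h: "(\<forall>n\<ge>1. c n \<noteq> 0) \<and> (\<forall>n. lattice c2 c3 * P n = P (Suc n) + smult (b n) (P n)
                + (if n = 0 then 0 else smult (c n) (P (n - 1))))"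
    using conjunct2[OF assms[unfolded orthogonal_lattice_def]] by metis
  have r: "\<forall>n. lattice c2 c3 * P n = P (Suc n) + smult (b n) (P n)
                + (if n = 0 then 0 else smult (c n) (P (n - 1)))" using h by (rule conjunct2)
  have "lattice c2 c3 * P 0 = P (Suc 0) + smult (b 0) (P 0) + 0" using spec[OF r, of 0] by simp
  then have "P (Suc 0) = lattice c2 c3 - smult (b 0) 1" unfolding P0 by (simp add: algebra_simps)
  then have P1: "P 1 = lattice c2 c3 - [:b 0:]" by (simp add: one_pCons)
  have "divdiff c2 c3 (P 1) = [:c2, 2:] div [:c2, 2:]"
  proof -
    have "pcompose (lattice c2 c3) [:1/2, 1:] - [:b 0:] - (pcompose (lattice c2 c3) [:-1/2, 1:] - [:b 0:])
        = pcompose (lattice c2 c3) [:1/2, 1:] - pcompose (lattice c2 c3) [:-1/2, 1:]" by simp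
    then show ?thesis unfolding divdiff_def P1 pcompose_diff pcompose_const denom by simp
  qed
  also have "\<dots> = 1" by simp
  finally show ?thesis by (simp add: dprime_def)
qed

lemma expand_mmult:
  assumes "finite S" "{k. F i k \<noteq> 0} \<subseteq> S"
    "\<And>k. k \<in> S \<Longrightarrow> (\<Sum>m\<le>N. smult (G k m) (theta c2 c3 m)) = V k"
  shows "(\<Sum>m\<le>N. smult (mmult F G i m) (theta c2 c3 m)) = (\<Sum>k\<in>S. smult (F i k) (V k))"
proof -
  have "(\<Sum>m\<le>N. smult (mmult F G i m) (theta c2 c3 m))
      = (\<Sum>m\<le>N. \<Sum>k\<in>S. smult (F i k) (smult (G k m) (theta c2 c3 m)))"
    by (simp add: mmult_eq[where S=S and F=F and i=i, OF assms(1,2)] smult_sum)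
  also have "\<dots> = (\<Sum>k\<in>S. \<Sum>m\<le>N. smult (F i k) (smult (G k m) (theta c2 c3 m)))"
    by (rule sum.swap)
  also have "\<dots> = (\<Sum>k\<in>S. smult (F i k) (V k))"
    by (rule sum.cong) (simp_all add: assms(3)[symmetric] smult_sum_right smult_smult)
  finally show ?thesis .
qed

lemma X1_theta:
  assumes "k < N"
  shows "(\<Sum>m\<le>N. smult (X1 c2 c3 k m) (theta c2 c3 m)) = lattice c2 c3 * theta c2 c3 k"
proof -
  have "(\<Sum>m\<le>N. smult (X1 c2 c3 k m) (theta c2 c3 m))
     = (\<Sum>m\<le>N. (if m = Suc k then theta c2 c3 m else 0) + (if m = k then smult (fcoef c2 c3 k) (theta c2 c3 m) else 0))"
    by (rule sum.cong) (auto simp: X1_def)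
  also have "\<dots> = theta c2 c3 (Suc k) + smult (fcoef c2 c3 k) (theta c2 c3 k)"
    using assms by (simp add: sum.distrib)
  finally show ?thesis by (simp add: mu_theta)
qed

lemma side_X1:
  assumes "orthogonal_lattice (lattice c2 c3) P"
  shows "(\<Sum>m\<le>Suc i. smult (mmult (Atilde c2 c3 P) (X1 c2 c3) i m) (theta c2 c3 m))
     = lattice c2 c3 * dprime c2 c3 P (Suc i)"
proof -
  have "(\<Sum>m\<le>Suc i. smult (mmult (Atilde c2 c3 P) (X1 c2 c3) i m) (theta c2 c3 m))
     = (\<Sum>k\<le>i. smult (Atilde c2 c3 P i k) (lattice c2 c3 * theta c2 c3 k))"
    by (rule expand_mmult) (simp, rule supp_le, simp add: Atilde_zero[OF assms], rule X1_theta, simp)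
  also have "\<dots> = lattice c2 c3 * dprime c2 c3 P (Suc i)"
    unfolding Q_repr0[OF assms] sum_distrib_left mult_smult_right ..
  finally show ?thesis .
qed

lemma side_M:
  assumes "orthogonal_lattice (lattice c2 c3) P"
  shows "(\<Sum>m\<le>Suc i. smult (mmult (Mtri beta gamma) (Atilde c2 c3 P) i m) (theta c2 c3 m))
     = dprime c2 c3 P (Suc (Suc i)) + smult (beta i) (dprime c2 c3 P (Suc i))
       + (if i = 0 then 0 else smult (gamma i) (dprime c2 c3 P (Suc (i - 1))))"
proof -
  let ?Q = "\<lambda>k. dprime c2 c3 P (Suc k)"
  have "(\<Sum>m\<le>Suc i. smult (mmult (Mtri beta gamma) (Atilde c2 c3 P) i m) (theta c2 c3 m))
     = (\<Sum>k\<le>Suc i. smult (Mtri beta gamma i k) (?Q k))"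
    by (rule expand_mmult) (simp, rule supp_le, simp add: Mtri_def, rule Q_repr[symmetric, OF assms], simp)
  also have "\<dots> = (\<Sum>k\<le>Suc i. (if k = i then smult (beta i) (?Q k) else 0) + (if k = Suc i then ?Q k else 0)
        + (if i = 0 then 0 else if k = i - 1 then smult (gamma i) (?Q k) else 0))"
    by (rule sum.cong) (auto simp: Mtri_def)
  also have "\<dots> = ?Q (Suc i) + smult (beta i) (?Q i) + (if i = 0 then 0 else smult (gamma i) (?Q (i - 1)))"
    by (simp add: sum.distrib)
  finally show ?thesis by simp
qed

lemma vanish:
  assumes "orthogonal_lattice (lattice c2 c3) P" "Suc i < m"
  shows "mmult (Mtri beta gamma) (Atilde c2 c3 P) i m = 0"
    "mmult (Atilde c2 c3 P) (X1 c2 c3) i m = 0"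
proof -
  have "mmult (Mtri beta gamma) (Atilde c2 c3 P) i m = (\<Sum>k\<le>Suc i. Mtri beta gamma i k * Atilde c2 c3 P k m)"
    by (rule mmult_eq) (simp, rule supp_le, simp add: Mtri_def)
  also have "\<dots> = 0"
    using assms(2) by (intro sum.neutral) (auto simp: Atilde_zero[OF assms(1)])
  finally show "mmult (Mtri beta gamma) (Atilde c2 c3 P) i m = 0" .
  have "mmult (Atilde c2 c3 P) (X1 c2 c3) i m = (\<Sum>k\<le>i. Atilde c2 c3 P i k * X1 c2 c3 k m)"
    by (rule mmult_eq) (simp, rule supp_le, simp add: Atilde_zero[OF assms(1)])
  also have "\<dots> = 0"
    using assms(2) by (intro sum.neutral) (auto simp: X1_def)
  finally show "mmult (Atilde c2 c3 P) (X1 c2 c3) i m = 0" .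
qed

theorem proposition3p1:
  fixes c2 c3 :: "'a::field_char_0" and P :: "nat \<Rightarrow> 'a poly"
  assumes "orthogonal_lattice (lattice c2 c3) P"
  shows "classical_lattice c2 c3 P \<longleftrightarrow>
    (\<exists>beta' gamma'.
       (\<forall>n\<ge>1. gamma' n \<noteq> 0) \<and>
       mmult (Mtri beta' gamma') (Atilde c2 c3 P) = mmult (Atilde c2 c3 P) (X1 c2 c3))"
proof -
  have key: "(\<forall>n. lattice c2 c3 * dprime c2 c3 P (Suc n) = dprime c2 c3 P (Suc (Suc n))
        + smult (beta n) (dprime c2 c3 P (Suc n))
        + (if n = 0 then 0 else smult (gamma n) (dprime c2 c3 P (Suc (n - 1)))))
      \<longleftrightarrow> mmult (Mtri beta gamma) (Atilde c2 c3 P) = mmult (Atilde c2 c3 P) (X1 c2 c3)" for beta gamma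
  proof
    assume R: "\<forall>n. lattice c2 c3 * dprime c2 c3 P (Suc n) = dprime c2 c3 P (Suc (Suc n))
        + smult (beta n) (dprime c2 c3 P (Suc n))
        + (if n = 0 then 0 else smult (gamma n) (dprime c2 c3 P (Suc (n - 1))))"
    show "mmult (Mtri beta gamma) (Atilde c2 c3 P) = mmult (Atilde c2 c3 P) (X1 c2 c3)"
    proof (intro ext)
      fix i m
      show "mmult (Mtri beta gamma) (Atilde c2 c3 P) i m = mmult (Atilde c2 c3 P) (X1 c2 c3) i m"
      proof (cases "m \<le> Suc i")
        case True
        have "(\<Sum>m\<le>Suc i. smult (mmult (Mtri beta gamma) (Atilde c2 c3 P) i m) (theta c2 c3 m))
            = (\<Sum>m\<le>Suc i. smult (mmult (Atilde c2 c3 P) (X1 c2 c3) i m) (theta c2 c3 m))"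
          unfolding side_M[OF assms] side_X1[OF assms] using spec[OF R, of i] by simp
        from theta_indep[OF this True] show ?thesis .
      next
        case False then show ?thesis using vanish[OF assms, of i m] by simp
      qed
    qed
  next
    assume E: "mmult (Mtri beta gamma) (Atilde c2 c3 P) = mmult (Atilde c2 c3 P) (X1 c2 c3)"
    show "\<forall>n. lattice c2 c3 * dprime c2 c3 P (Suc n) = dprime c2 c3 P (Suc (Suc n))
        + smult (beta n) (dprime c2 c3 P (Suc n))
        + (if n = 0 then 0 else smult (gamma n) (dprime c2 c3 P (Suc (n - 1))))"
    proof
      fix n
      have "lattice c2 c3 * dprime c2 c3 P (Suc n)
          = (\<Sum>m\<le>Suc n. smult (mmult (Atilde c2 c3 P) (X1 c2 c3) n m) (theta c2 c3 m))"
        by (rule side_X1[OF assms, symmetric])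
      also have "\<dots> = (\<Sum>m\<le>Suc n. smult (mmult (Mtri beta gamma) (Atilde c2 c3 P) n m) (theta c2 c3 m))"
        unfolding E ..
      also have "\<dots> = dprime c2 c3 P (Suc (Suc n))
        + smult (beta n) (dprime c2 c3 P (Suc n))
        + (if n = 0 then 0 else smult (gamma n) (dprime c2 c3 P (Suc (n - 1))))"
        by (rule side_M[OF assms])
      finally show "lattice c2 c3 * dprime c2 c3 P (Suc n) = dprime c2 c3 P (Suc (Suc n))
        + smult (beta n) (dprime c2 c3 P (Suc n))
        + (if n = 0 then 0 else smult (gamma n) (dprime c2 c3 P (Suc (n - 1))))" .
    qed
  qed
  have cl: "classical_lattice c2 c3 P \<longleftrightarrow> (\<exists>b c. (\<forall>n\<ge>1. c n \<noteq> 0) \<and>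
     (\<forall>n. lattice c2 c3 * dprime c2 c3 P (Suc n) = dprime c2 c3 P (Suc (Suc n))
        + smult (b n) (dprime c2 c3 P (Suc n))
        + (if n = 0 then 0 else smult (c n) (dprime c2 c3 P (Suc (n - 1))))))"
    unfolding classical_lattice_def orthogonal_lattice_def by (simp only: Q0[OF assms] simp_thms)
  show ?thesis unfolding cl by (simp only: key)
qed

end
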